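(* Let $U$ be a rise function that is three times continuously differentiable on $[0,1]$. (i) If $U''(\phi)\le0$ and $U'''(\phi)\le 2\,U''(\phi)^2/U'(\phi)$ for all $\phi\in[0,1]$, then $U$ is icpd. (ii) If $U''(\phi)\ge0$ and $U'''(\phi)\ge 2\,U''(\phi)^2/U'(\phi)$ for all $\phi\in[0,1]$, then $U$ is dcpd. More generally, $U$ is icpd if $U'''(\phi)\le 3\frac{U''(\phi)^2}{U'(\phi)}-\frac{U''(\psi)U''(\phi)U'(\phi)}{U'(\psi)^2}$ for all $0\le\psi\le\phi\le1$, and dcpd if the reverse inequality holds for all $0\le\psi\le\phi\le1$.
   Context: A rise function is a smooth $U:[0,\infty)\to[0,\infty)$ with $U'>0$, $U(0)=0$, $U(1)=1$. $H_\varepsilon(\phi)=U^{-1}(U(\phi)+\varepsilon)$ and $\Delta H(\phi,\Delta\phi,\varepsilon)=H_\varepsilon(\phi+\Delta\phi)-H_\varepsilon(\phi)$ on $\mathcal{D}=\{(\phi,\Delta\phi,\varepsilon):0\le\varepsilon\le1,\ 0\le\phi\le1,\ 0\le\Delta\phi\le U^{-1}(1-\varepsilon)-\phi\}$. $U$ is icpd (increasing the change of phase differences) if $\partial_\phi\Delta H\ge0$ on $\mathcal{D}$, and dcpd (decreasing the change of phase differences) if $\partial_\phi\Delta H\le0$ on $\mathcal{D}$. *)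

theory Defs
  imports Complex_Main
begin

definition rise_function :: "(real \<Rightarrow> real) \<Rightarrow> (real \<Rightarrow> real) \<Rightarrow> bool" where
  "rise_function U U' \<longleftrightarrow>
     U 0 = 0 \<and> U 1 = 1 \<and>
     (\<forall>x\<ge>0. U x \<ge> 0 \<and> (U has_real_derivative U' x) (at x within {0..}) \<and> U' x > 0) \<and>
     continuous_on {0..} U'"

definition Uinv :: "(real \<Rightarrow> real) \<Rightarrow> real \<Rightarrow> real" where
  "Uinv U y = inv_into {0..} U y"

definition Heps :: "(real \<Rightarrow> real) \<Rightarrow> real \<Rightarrow> real \<Rightarrow> real" where
  "Heps U \<epsilon> \<phi> = Uinv U (U \<phi> + \<epsilon>)"

definition DeltaH :: "(real \<Rightarrow> real) \<Rightarrow> real \<Rightarrow> real \<Rightarrow> real \<Rightarrow> real" where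
  "DeltaH U \<phi> d\<phi> \<epsilon> = Heps U \<epsilon> (\<phi> + d\<phi>) - Heps U \<epsilon> \<phi>"

definition domD :: "(real \<Rightarrow> real) \<Rightarrow> (real \<times> real \<times> real) set" where
  "domD U = {(\<phi>, d\<phi>, \<epsilon>). 0 \<le> \<epsilon> \<and> \<epsilon> \<le> 1 \<and> 0 \<le> \<phi> \<and> \<phi> \<le> 1 \<and>
                             0 \<le> d\<phi> \<and> d\<phi> \<le> Uinv U (1 - \<epsilon>) - \<phi>}"

definition icpd :: "(real \<Rightarrow> real) \<Rightarrow> bool" where
  "icpd U \<longleftrightarrow> (\<forall>\<phi> d\<phi> \<epsilon>. (\<phi>, d\<phi>, \<epsilon>) \<in> domD U \<longrightarrow>
      (\<exists>d\<ge>0. ((\<lambda>p. DeltaH U p d\<phi> \<epsilon>) has_real_derivative d)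
               (at \<phi> within {p. (p, d\<phi>, \<epsilon>) \<in> domD U})))"

definition dcpd :: "(real \<Rightarrow> real) \<Rightarrow> bool" where
  "dcpd U \<longleftrightarrow> (\<forall>\<phi> d\<phi> \<epsilon>. (\<phi>, d\<phi>, \<epsilon>) \<in> domD U \<longrightarrow>
      (\<exists>d\<le>0. ((\<lambda>p. DeltaH U p d\<phi> \<epsilon>) has_real_derivative d)
               (at \<phi> within {p. (p, d\<phi>, \<epsilon>) \<in> domD U})))"

end

theory Submission
  imports Defs
begin
lemma within0_at:
  fixes f :: "real \<Rightarrow> real"
  assumes "(f has_real_derivative D) (at x within {0..})" "x > 0"
  shows "(f has_real_derivative D) (at x)"
proof -
  have "(f has_real_derivative D) (at x within {0..x+1})"
    using assms(1) by (rule DERIV_subset) auto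
  thus ?thesis using at_within_Icc_at[of 0 x "x+1"] assms(2) by simp
qed

locale rsetup =
  fixes U U1 U2 U3 :: "real \<Rightarrow> real"
  assumes rise: "rise_function U U1"
    and d2: "\<forall>x\<in>{0..1}. (U1 has_real_derivative U2 x) (at x within {0..1})"
    and d3: "\<forall>x\<in>{0..1}. (U2 has_real_derivative U3 x) (at x within {0..1})"
    and c3: "continuous_on {0..1} U3"
begin

lemma U0: "U 0 = 0" and U1v: "U 1 = 1" and pos: "x \<ge> 0 \<Longrightarrow> U1 x > 0"
  and derU: "x \<ge> 0 \<Longrightarrow> (U has_real_derivative U1 x) (at x within {0..})"
  and cU1: "continuous_on {0..} U1"
  using rise unfolding rise_function_def by auto

lemma derU_at: "x > 0 \<Longrightarrow> DERIV U x :> U1 x"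
  using derU within0_at by simp

lemma contU: "continuous_on {0..} U"
  by (rule DERIV_continuous_on[of _ _ U1]) (use derU in auto)

lemma strict: assumes "0 \<le> x" "x < y" shows "U x < U y"
proof (rule DERIV_pos_imp_increasing_open[OF assms(2)])
  fix z assume "x < z" "z < y"
  thus "\<exists>d. DERIV U z :> d \<and> d > 0" using assms derU_at pos by (intro exI[of _ "U1 z"]) auto
next
  show "continuous_on {x..y} U" by (rule continuous_on_subset[OF contU]) (use assms in auto)
qed

lemma mono_le: "0 \<le> x \<Longrightarrow> x \<le> y \<Longrightarrow> U x \<le> U y"
  using strict by (cases "x = y") (auto intro: less_imp_le)

lemma le_iff: "0 \<le> x \<Longrightarrow> 0 \<le> y \<Longrightarrow> U x \<le> U y \<longleftrightarrow> x \<le> y"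
  using strict mono_le by (meson linorder_not_le)

lemma inj: "inj_on U {0..}"
  by (rule inj_onI) (metis atLeast_iff le_iff order_antisym order_refl)

lemma Uinv_U: "0 \<le> x \<Longrightarrow> Uinv U (U x) = x"
  unfolding Uinv_def using inj by (simp add: inv_into_f_f)

definition B where "B = U 2"

lemma B1: "B > 1" unfolding B_def using strict[of 1 2] U1v by simp

lemma img: "U ` {0..2} = {0..B}"
proof
  show "U ` {0..2} \<subseteq> {0..B}" using mono_le U0 unfolding B_def by (auto, metis U0 mono_le order_refl)
next
  show "{0..B} \<subseteq> U ` {0..2}"
  proof
    fix y assume y: "y \<in> {0..B}"
    have "\<exists>x. 0 \<le> x \<and> x \<le> 2 \<and> U x = y"
      by (rule IVT') (use y U0 B_def continuous_on_subset[OF contU] in auto)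
    thus "y \<in> U ` {0..2}" by auto
  qed
qed

lemma Uinv_props: assumes "0 \<le> y" "y \<le> B"
  shows "U (Uinv U y) = y" "0 \<le> Uinv U y" "Uinv U y \<le> 2"
proof -
  obtain x where x: "x \<in> {0..2}" "U x = y" using img assms by force
  have "Uinv U y = x" using Uinv_U x by auto
  thus "U (Uinv U y) = y" "0 \<le> Uinv U y" "Uinv U y \<le> 2" using x by auto
qed

lemma contUinv: "continuous_on {0..B} (Uinv U)"
proof -
  have "continuous_on (U ` {0..2}) (Uinv U)"
    by (rule continuous_on_inv) (use continuous_on_subset[OF contU] Uinv_U in auto)
  thus ?thesis using img by simp
qed

lemma derUinv: assumes "0 < y" "y < B"
  shows "DERIV (Uinv U) y :> inverse (U1 (Uinv U y))"
proof (rule DERIV_inverse_function[where a=0 and b=B and f=U])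
  have p: "U (Uinv U y) = y" "0 \<le> Uinv U y" using Uinv_props assms by auto
  have "Uinv U y \<noteq> 0" using p U0 assms by auto
  hence "Uinv U y > 0" using p by simp
  thus "DERIV U (Uinv U y) :> U1 (Uinv U y)" using derU_at by simp
  show "U1 (Uinv U y) \<noteq> 0" using pos p by (metis less_irrefl)
  show "0 < y" "y < B" by fact+
  show "\<And>z. 0 < z \<Longrightarrow> z < B \<Longrightarrow> U (Uinv U z) = z" using Uinv_props by simp
  have "continuous_on {0<..<B} (Uinv U)" by (rule continuous_on_subset[OF contUinv]) auto
  thus "isCont (Uinv U) y"
    using continuous_on_eq_continuous_at[OF open_greaterThanLessThan, of 0 B "Uinv U"] assms by auto
qed


lemma c_props: assumes "0 \<le> e" "e \<le> 1"
  shows "U (Uinv U (1-e)) = 1 - e" "0 \<le> Uinv U (1-e)" "Uinv U (1-e) \<le> 1"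
proof -
  show u: "U (Uinv U (1-e)) = 1 - e" "0 \<le> Uinv U (1-e)" using Uinv_props[of "1-e"] assms B1 by auto
  show "Uinv U (1-e) \<le> 1" using le_iff[of "Uinv U (1-e)" 1] u U1v assms by auto
qed

lemma H_props: assumes "0 \<le> e" "e \<le> 1" "0 \<le> p" "p \<le> Uinv U (1-e)"
  shows "U (Heps U e p) = U p + e" "p \<le> Heps U e p" "Heps U e p \<le> 1" "0 \<le> Heps U e p"
proof -
  have up: "U p \<le> 1 - e" using c_props[OF assms(1,2)] mono_le[OF assms(3,4)] by simp
  have u0: "U p \<ge> 0" using mono_le[OF _ assms(3)] U0 by simp
  have y: "0 \<le> U p + e" "U p + e \<le> B" using up u0 B1 assms by auto
  show h: "U (Heps U e p) = U p + e" "0 \<le> Heps U e p" unfolding Heps_def using Uinv_props[OF y] by auto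
  show "p \<le> Heps U e p" using le_iff[OF assms(3) h(2)] h assms by simp
  show "Heps U e p \<le> 1" using le_iff[OF h(2), of 1] h up U1v by simp
qed

lemma H_lt1: assumes "0 \<le> e" "e \<le> 1" "0 \<le> p" "p < Uinv U (1-e)"
  shows "Heps U e p < 1"
proof -
  have "U p < 1 - e" using c_props[OF assms(1,2)] strict[OF assms(3,4)] by simp
  hence "U (Heps U e p) < U 1" using H_props[OF assms(1,2,3)] assms U1v by simp
  show ?thesis
  proof (rule ccontr)
    assume "\<not> Heps U e p < 1"
    hence "U 1 \<le> U (Heps U e p)" using mono_le[of 1 "Heps U e p"] by simp
    thus False using \<open>U (Heps U e p) < U 1\<close> by simp
  qed
qed

lemma derH: assumes "0 < e" "e \<le> 1" "0 \<le> p" "p \<le> Uinv U (1-e)"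
  shows "(Heps U e has_real_derivative U1 p / U1 (Heps U e p)) (at p within {0..})"
proof -
  have up: "U p \<le> 1 - e" using c_props assms mono_le[OF assms(3,4)] by simp
  have u0: "U p \<ge> 0" using mono_le[OF _ assms(3)] U0 by simp
  have y: "0 < U p + e" "U p + e < B" using up u0 B1 assms by auto
  have d1: "DERIV (Uinv U) (U p + e) :> inverse (U1 (Heps U e p))"
    using derUinv[OF y] unfolding Heps_def by simp
  have d2: "((\<lambda>q. U q + e) has_real_derivative U1 p) (at p within {0..})"
    using derU[OF assms(3)] by (auto intro!: derivative_eq_intros)
  have "(Uinv U \<circ> (\<lambda>q. U q + e) has_real_derivative inverse (U1 (Heps U e p)) * U1 p) (at p within {0..})"
    using DERIV_chain[OF _ d2] d1 by simp
  moreover have "Uinv U \<circ> (\<lambda>q. U q + e) = Heps U e" by (auto simp: Heps_def fun_eq_iff)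
  ultimately show ?thesis by (simp add: field_simps)
qed

lemma contH: assumes "0 \<le> e" "e \<le> 1"
  shows "continuous_on {0..Uinv U (1-e)} (Heps U e)"
proof -
  have "continuous_on {0..Uinv U (1-e)} (\<lambda>q. U q + e)"
    by (intro continuous_intros continuous_on_subset[OF contU]) auto
  moreover have "(\<lambda>q. U q + e) ` {0..Uinv U (1-e)} \<subseteq> {0..B}"
  proof
    fix y assume "y \<in> (\<lambda>q. U q + e) ` {0..Uinv U (1-e)}"
    then obtain p where p: "0 \<le> p" "p \<le> Uinv U (1-e)" "y = U p + e" by auto
    have "U p \<le> 1 - e" using c_props assms mono_le[OF p(1,2)] by simp
    moreover have "U p \<ge> 0" using mono_le[OF _ p(1)] U0 by simp
    ultimately show "y \<in> {0..B}" using p B1 assms by auto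
  qed
  ultimately have "continuous_on {0..Uinv U (1-e)} (Uinv U \<circ> (\<lambda>q. U q + e))"
    by (intro continuous_on_compose continuous_on_subset[OF contUinv])
  moreover have "Uinv U \<circ> (\<lambda>q. U q + e) = Heps U e" by (auto simp: Heps_def fun_eq_iff)
  ultimately show ?thesis by simp
qed

definition k where "k x = U2 x / (U1 x)^2"

lemma cU2: "continuous_on {0..1} U2"
  by (rule DERIV_continuous_on[of _ _ U3]) (use d3 in auto)

lemma k_deriv: assumes "0 < x" "x < 1"
  shows "DERIV k x :> U3 x / (U1 x)^2 - 2 * (U2 x)^2 / (U1 x)^3"
proof -
  have e: "at x within {0..1} = at x" using at_within_Icc_at[of 0 x 1] assms by simp
  have a: "DERIV U1 x :> U2 x" "DERIV U2 x :> U3 x"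
    using d2 d3 assms by (simp_all add: e[symmetric])
  have p: "U1 x > 0" using pos assms by simp
  have "DERIV (\<lambda>x. U2 x / (U1 x)^2) x :> (U3 x * (U1 x)^2 - U2 x * (2 * U1 x * U2 x)) / ((U1 x)^2 * (U1 x)^2)"
  proof -
    have q: "DERIV (\<lambda>x. (U1 x)^2) x :> 2 * U1 x * U2 x"
      using DERIV_mult[OF a(1) a(1)] by (simp add: power2_eq_square algebra_simps)
    show ?thesis using DERIV_divide[OF a(2) q] p by simp
  qed
  moreover have "(U3 x * (U1 x)^2 - U2 x * (2 * U1 x * U2 x)) / ((U1 x)^2 * (U1 x)^2)
      = U3 x / (U1 x)^2 - 2 * (U2 x)^2 / (U1 x)^3"
    using p by (simp add: field_simps power2_eq_square power3_eq_cube)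
  ultimately show ?thesis unfolding k_def[abs_def] by simp
qed

lemma k_cont: "continuous_on {0..1} k"
  unfolding k_def[abs_def] using pos
  by (intro continuous_on_divide) (auto intro!: continuous_intros cU2 continuous_on_subset[OF cU1] simp: less_imp_neq[symmetric])


lemma k_anti: assumes h: "\<forall>x\<in>{0..1}. U3 x \<le> 2 * (U2 x)^2 / U1 x"
  and xy: "0 \<le> x" "x \<le> y" "y \<le> 1" shows "k y \<le> k x"
proof (rule DERIV_nonpos_imp_decreasing_open[OF xy(2)])
  fix z assume z: "x < z" "z < y"
  have p: "U1 z > 0" using pos z xy by simp
  have "U3 z \<le> 2 * (U2 z)^2 / U1 z" using h z xy by auto
  hence "U3 z / (U1 z)^2 \<le> 2 * (U2 z)^2 / U1 z / (U1 z)^2" using p by (intro divide_right_mono) auto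
  also have "\<dots> = 2 * (U2 z)^2 / (U1 z)^3" using p by (simp add: field_simps power2_eq_square power3_eq_cube)
  finally show "\<exists>d. DERIV k z :> d \<and> d \<le> 0" using k_deriv[of z] z xy by (intro exI[of _ "U3 z / (U1 z)^2 - 2 * (U2 z)^2 / (U1 z)^3"] conjI) auto
next
  show "continuous_on {x..y} k" by (rule continuous_on_subset[OF k_cont]) (use xy in auto)
qed

lemma k_mono: assumes h: "\<forall>x\<in>{0..1}. U3 x \<ge> 2 * (U2 x)^2 / U1 x"
  and xy: "0 \<le> x" "x \<le> y" "y \<le> 1" shows "k x \<le> k y"
proof (rule DERIV_nonneg_imp_increasing_open[OF xy(2)])
  fix z assume z: "x < z" "z < y"
  have p: "U1 z > 0" using pos z xy by simp
  have "U3 z \<ge> 2 * (U2 z)^2 / U1 z" using h z xy by auto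
  hence "U3 z / (U1 z)^2 \<ge> 2 * (U2 z)^2 / U1 z / (U1 z)^2" using p by (intro divide_right_mono) auto
  moreover have "2 * (U2 z)^2 / U1 z / (U1 z)^2 = 2 * (U2 z)^2 / (U1 z)^3" using p by (simp add: field_simps power2_eq_square power3_eq_cube)
  ultimately show "\<exists>d. DERIV k z :> d \<and> d \<ge> 0" using k_deriv[of z] z xy by (intro exI[of _ "U3 z / (U1 z)^2 - 2 * (U2 z)^2 / (U1 z)^3"] conjI) auto
next
  show "continuous_on {x..y} k" by (rule continuous_on_subset[OF k_cont]) (use xy in auto)
qed


definition G where "G e p = U1 p / U1 (Heps U e p)"

lemma G_cont: assumes "0 \<le> e" "e \<le> 1" shows "continuous_on {0..Uinv U (1-e)} (G e)"
proof -
  have "continuous_on {0..Uinv U (1-e)} (\<lambda>p. U1 (Heps U e p))"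
    by (rule continuous_on_compose2[OF cU1 contH[OF assms]]) (use H_props[OF assms] in auto)
  moreover have "continuous_on {0..Uinv U (1-e)} U1" by (rule continuous_on_subset[OF cU1]) auto
  ultimately show ?thesis unfolding G_def[abs_def] using H_props[OF assms] pos
    by (intro continuous_on_divide) (auto simp: less_imp_neq[symmetric])
qed

lemma G_deriv: assumes "0 < e" "e \<le> 1" "0 < p" "p < Uinv U (1-e)"
  shows "DERIV (G e) p :> (U1 p)^2 / U1 (Heps U e p) * (k p - k (Heps U e p))"
proof -
  let ?H = "Heps U e p"
  have c1: "Uinv U (1-e) \<le> 1" using c_props assms by simp
  have h: "p \<le> ?H" "?H < 1" using H_props[of e p] H_lt1[of e p] assms by auto
  have ee: "\<And>x::real. 0 < x \<Longrightarrow> x < 1 \<Longrightarrow> at x within {0..1} = at x" by (rule at_within_Icc_at)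
  have dU1: "\<And>x. 0 < x \<Longrightarrow> x < 1 \<Longrightarrow> DERIV U1 x :> U2 x"
    using d2 ee by (metis atLeastAtMost_iff less_imp_le)
  have dH: "DERIV (Heps U e) p :> U1 p / U1 ?H"
    using within0_at[OF derH[of e p]] assms by simp
  have dUH: "DERIV (U1 \<circ> Heps U e) p :> U2 ?H * (U1 p / U1 ?H)"
    using DERIV_chain[OF dU1[of ?H] dH] h assms by simp
  have dp: "DERIV U1 p :> U2 p" using dU1 assms c1 by simp
  have A: "U1 p > 0" "U1 ?H > 0" using pos h assms by auto
  have "DERIV (\<lambda>x. U1 x / (U1 \<circ> Heps U e) x) p :> (U2 p * U1 ?H - U1 p * (U2 ?H * (U1 p / U1 ?H))) / (U1 ?H * U1 ?H)"
    using DERIV_divide[OF dp dUH] A by simp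
  moreover have "(U2 p * U1 ?H - U1 p * (U2 ?H * (U1 p / U1 ?H))) / (U1 ?H * U1 ?H)
     = (U1 p)^2 / U1 ?H * (k p - k ?H)"
    using A unfolding k_def by (simp add: field_simps power2_eq_square)
  ultimately show ?thesis unfolding G_def[abs_def] by (simp add: o_def)
qed

lemma G_mono: assumes kk: "\<And>x y. 0 \<le> x \<Longrightarrow> x \<le> y \<Longrightarrow> y \<le> 1 \<Longrightarrow> k y \<le> k x"
  and e: "0 < e" "e \<le> 1" and ab: "0 \<le> a" "a \<le> b" "b \<le> Uinv U (1-e)"
  shows "G e a \<le> G e b"
proof (rule DERIV_nonneg_imp_increasing_open[OF ab(2)])
  fix z assume z: "a < z" "z < b"
  have h: "z \<le> Heps U e z" "Heps U e z \<le> 1" "U1 (Heps U e z) > 0"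
    using H_props[of e z] pos[of "Heps U e z"] e ab z by auto
  have "k (Heps U e z) \<le> k z" using kk[of z "Heps U e z"] h z ab by simp
  hence "(U1 z)^2 / U1 (Heps U e z) * (k z - k (Heps U e z)) \<ge> 0" using h by simp
  thus "\<exists>d. DERIV (G e) z :> d \<and> d \<ge> 0" using G_deriv[of e z] e ab z by (intro exI conjI) auto
next
  show "continuous_on {a..b} (G e)" by (rule continuous_on_subset[OF G_cont]) (use e ab in auto)
qed

lemma G_anti: assumes kk: "\<And>x y. 0 \<le> x \<Longrightarrow> x \<le> y \<Longrightarrow> y \<le> 1 \<Longrightarrow> k x \<le> k y"
  and e: "0 < e" "e \<le> 1" and ab: "0 \<le> a" "a \<le> b" "b \<le> Uinv U (1-e)"
  shows "G e b \<le> G e a"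
proof (rule DERIV_nonpos_imp_decreasing_open[OF ab(2)])
  fix z assume z: "a < z" "z < b"
  have h: "z \<le> Heps U e z" "Heps U e z \<le> 1" "U1 (Heps U e z) > 0"
    using H_props[of e z] pos[of "Heps U e z"] e ab z by auto
  have "k z \<le> k (Heps U e z)" using kk[of z "Heps U e z"] h z ab by simp
  hence "(U1 z)^2 / U1 (Heps U e z) * (k z - k (Heps U e z)) \<le> 0" using h
    by (intro mult_nonneg_nonpos) auto
  thus "\<exists>d. DERIV (G e) z :> d \<and> d \<le> 0" using G_deriv[of e z] e ab z by (intro exI conjI) auto
next
  show "continuous_on {a..b} (G e)" by (rule continuous_on_subset[OF G_cont]) (use e ab in auto)
qed

lemma DH_deriv: assumes D: "(ph, dph, e) \<in> domD U" and e: "0 < e"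
  shows "((\<lambda>p. DeltaH U p dph e) has_real_derivative G e (ph + dph) - G e ph)
           (at ph within {p. (p, dph, e) \<in> domD U})"
proof -
  let ?S = "{p. (p, dph, e) \<in> domD U}"
  have D': "0 \<le> e" "e \<le> 1" "0 \<le> ph" "ph \<le> 1" "0 \<le> dph" "dph \<le> Uinv U (1-e) - ph"
    using D unfolding domD_def by auto
  have S0: "?S \<subseteq> {0..}" "(\<lambda>p. p + dph) ` ?S \<subseteq> {0..}" unfolding domD_def by auto
  have d1: "(Heps U e has_real_derivative U1 (ph + dph) / U1 (Heps U e (ph+dph))) (at (ph + dph) within {0..})"
    using derH[of e "ph + dph"] D' e by simp
  have d1': "(Heps U e \<circ> (\<lambda>p. p + dph) has_real_derivative U1 (ph + dph) / U1 (Heps U e (ph+dph)) * 1) (at ph within ?S)"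
    by (rule DERIV_image_chain[OF DERIV_subset[OF d1 S0(2)]]) (auto intro!: derivative_eq_intros)
  have d2: "(Heps U e has_real_derivative U1 ph / U1 (Heps U e ph)) (at ph within ?S)"
    using DERIV_subset[OF derH[of e ph] S0(1)] D' e by simp
  have "((\<lambda>p. (Heps U e \<circ> (\<lambda>p. p + dph)) p - Heps U e p) has_real_derivative
      U1 (ph + dph) / U1 (Heps U e (ph+dph)) * 1 - U1 ph / U1 (Heps U e ph)) (at ph within ?S)"
    by (rule DERIV_diff[OF d1' d2])
  thus ?thesis unfolding DeltaH_def G_def by (simp add: o_def)
qed

lemma DH_eps0: assumes D: "(ph, dph, 0) \<in> domD U"
  shows "((\<lambda>p. DeltaH U p dph 0) has_real_derivative 0) (at ph within {p. (p, dph, 0) \<in> domD U})"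
proof (rule has_field_derivative_transform_within[OF DERIV_const[of dph] zero_less_one])
  show "ph \<in> {p. (p, dph, 0) \<in> domD U}" using D by simp
  fix x assume "x \<in> {p. (p, dph, 0) \<in> domD U}"
  hence "0 \<le> x" "0 \<le> dph" unfolding domD_def by auto
  thus "dph = DeltaH U x dph 0" unfolding DeltaH_def Heps_def using Uinv_U by simp
qed

end

theorem mainTheorem12:
  fixes U U1 U2 U3 :: "real \<Rightarrow> real"
  assumes rise: "rise_function U U1"
    and d2: "\<forall>x\<in>{0..1}. (U1 has_real_derivative U2 x) (at x within {0..1})"
    and d3: "\<forall>x\<in>{0..1}. (U2 has_real_derivative U3 x) (at x within {0..1})"
    and c3: "continuous_on {0..1} U3"
  shows "((\<forall>\<phi>\<in>{0..1}. U2 \<phi> \<le> 0 \<and> U3 \<phi> \<le> 2 * (U2 \<phi>)\<^sup>2 / U1 \<phi>) \<longrightarrow> icpd U)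
    \<and> ((\<forall>\<phi>\<in>{0..1}. U2 \<phi> \<ge> 0 \<and> U3 \<phi> \<ge> 2 * (U2 \<phi>)\<^sup>2 / U1 \<phi>) \<longrightarrow> dcpd U)
    \<and> ((\<forall>\<psi> \<phi>. 0 \<le> \<psi> \<and> \<psi> \<le> \<phi> \<and> \<phi> \<le> 1 \<longrightarrow>
           U3 \<phi> \<le> 3 * (U2 \<phi>)\<^sup>2 / U1 \<phi> - U2 \<psi> * U2 \<phi> * U1 \<phi> / (U1 \<psi>)\<^sup>2) \<longrightarrow> icpd U)
    \<and> ((\<forall>\<psi> \<phi>. 0 \<le> \<psi> \<and> \<psi> \<le> \<phi> \<and> \<phi> \<le> 1 \<longrightarrow>
           U3 \<phi> \<ge> 3 * (U2 \<phi>)\<^sup>2 / U1 \<phi> - U2 \<psi> * U2 \<phi> * U1 \<phi> / (U1 \<psi>)\<^sup>2) \<longrightarrow> dcpd U)"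
proof -
  interpret R: rsetup U U1 U2 U3 using assms by unfold_locales
  have I: "icpd U" if h: "\<forall>x::real\<in>{0..1}. U3 x \<le> 2 * (U2 x)^2 / U1 x"
    unfolding icpd_def
  proof (intro allI impI)
    fix ph dph e assume D: "(ph, dph, e) \<in> domD U"
    have D': "0 \<le> e" "e \<le> 1" "0 \<le> ph" "0 \<le> dph" "dph \<le> Uinv U (1-e) - ph"
      using D unfolding domD_def by auto
    show "\<exists>d\<ge>0. ((\<lambda>p. DeltaH U p dph e) has_real_derivative d) (at ph within {p. (p, dph, e) \<in> domD U})"
    proof (cases "e = 0")
      case True thus ?thesis using R.DH_eps0 D by auto
    next
      case False
      hence e: "0 < e" using D' by simp
      have "R.G e ph \<le> R.G e (ph + dph)"
        by (rule R.G_mono[OF _ e D'(2)]) (use R.k_anti[OF h] D' in auto)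
      thus ?thesis using R.DH_deriv[OF D e] by (intro exI[of _ "R.G e (ph + dph) - R.G e ph"]) auto
    qed
  qed
  have Dc: "dcpd U" if h: "\<forall>x::real\<in>{0..1}. U3 x \<ge> 2 * (U2 x)^2 / U1 x"
    unfolding dcpd_def
  proof (intro allI impI)
    fix ph dph e assume D: "(ph, dph, e) \<in> domD U"
    have D': "0 \<le> e" "e \<le> 1" "0 \<le> ph" "0 \<le> dph" "dph \<le> Uinv U (1-e) - ph"
      using D unfolding domD_def by auto
    show "\<exists>d\<le>0. ((\<lambda>p. DeltaH U p dph e) has_real_derivative d) (at ph within {p. (p, dph, e) \<in> domD U})"
    proof (cases "e = 0")
      case True thus ?thesis using R.DH_eps0 D by auto
    next
      case False
      hence e: "0 < e" using D' by simp
      have "R.G e (ph + dph) \<le> R.G e ph"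
        by (rule R.G_anti[OF _ e D'(2)]) (use R.k_mono[OF h] D' in auto)
      thus ?thesis using R.DH_deriv[OF D e] by (intro exI[of _ "R.G e (ph + dph) - R.G e ph"]) auto
    qed
  qed
  have eq: "3 * (U2 x)\<^sup>2 / U1 x - U2 x * U2 x * U1 x / (U1 x)\<^sup>2 = 2 * (U2 x)^2 / U1 x" if "x \<in> {0..1}" for x :: real
    using R.pos[of x] that by (simp add: field_simps power2_eq_square)
  show ?thesis
  proof (intro conjI impI)
    show "icpd U" if "\<forall>\<phi>\<in>{0..1}. U2 \<phi> \<le> 0 \<and> U3 \<phi> \<le> 2 * (U2 \<phi>)\<^sup>2 / U1 \<phi>" using I that by auto
    show "dcpd U" if "\<forall>\<phi>\<in>{0..1}. U2 \<phi> \<ge> 0 \<and> U3 \<phi> \<ge> 2 * (U2 \<phi>)\<^sup>2 / U1 \<phi>" using Dc that by auto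
    show "icpd U" if h: "\<forall>\<psi> \<phi>. 0 \<le> \<psi> \<and> \<psi> \<le> \<phi> \<and> \<phi> \<le> 1 \<longrightarrow>
           U3 \<phi> \<le> 3 * (U2 \<phi>)\<^sup>2 / U1 \<phi> - U2 \<psi> * U2 \<phi> * U1 \<phi> / (U1 \<psi>)\<^sup>2"
    proof (rule I, intro ballI)
      fix x :: real assume x: "x \<in> {0..1}"
      thus "U3 x \<le> 2 * (U2 x)^2 / U1 x" using h[rule_format, of x x] eq[OF x] by auto
    qed
    show "dcpd U" if h: "\<forall>\<psi> \<phi>. 0 \<le> \<psi> \<and> \<psi> \<le> \<phi> \<and> \<phi> \<le> 1 \<longrightarrow>
           U3 \<phi> \<ge> 3 * (U2 \<phi>)\<^sup>2 / U1 \<phi> - U2 \<psi> * U2 \<phi> * U1 \<phi> / (U1 \<psi>)\<^sup>2"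
    proof (rule Dc, intro ballI)
      fix x :: real assume x: "x \<in> {0..1}"
      thus "U3 x \<ge> 2 * (U2 x)^2 / U1 x" using h[rule_format, of x x] eq[OF x] by auto
    qed
  qed
qed

end
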